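(* Let $U,V$ be independent Bernoulli random variables with means $p,q\in(0,1]$. Suppose $X,Y$ are real random variables with finite second moments such that $X\perp\!\!\!\perp V\mid U$ and $Y\perp\!\!\!\perp U\mid V$. Then \[{\rm Cov}(UX,VY)=pq\cdot{\rm Cov}(X,Y\mid U=V=1).\]
   Context: $X\perp\!\!\!\perp V\mid U$ denotes conditional independence of $X$ and $V$ given $U$. ${\rm Cov}(X,Y\mid U=V=1)$ is the covariance of $X$ and $Y$ under the conditional law given the event $\{U=V=1\}$. *)

theory Defs
  imports "HOL-Probability.Probability"
begin

definition covariance :: "'a measure \<Rightarrow> ('a \<Rightarrow> real) \<Rightarrow> ('a \<Rightarrow> real) \<Rightarrow> real" where
  "covariance M X Y =
     integral\<^sup>L M (\<lambda>\<omega>. (X \<omega> - integral\<^sup>L M X) * (Y \<omega> - integral\<^sup>L M Y))"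

definition cond_indep_discrete ::
  "'a measure \<Rightarrow> ('a \<Rightarrow> real) \<Rightarrow> ('a \<Rightarrow> real) \<Rightarrow> ('a \<Rightarrow> real) \<Rightarrow> bool" where
  "cond_indep_discrete M X V U \<longleftrightarrow>
     (\<forall>A\<in>sets borel. \<forall>B\<in>sets borel. \<forall>u.
        measure M {\<omega>\<in>space M. X \<omega> \<in> A \<and> V \<omega> \<in> B \<and> U \<omega> = u} * measure M {\<omega>\<in>space M. U \<omega> = u}
      = measure M {\<omega>\<in>space M. X \<omega> \<in> A \<and> U \<omega> = u} * measure M {\<omega>\<in>space M. V \<omega> \<in> B \<and> U \<omega> = u})"

end

theory Submission
  imports Defs
begin

lemma cond_int:
  fixes M :: "'a measure" and X :: "'a \<Rightarrow> real"
  assumes fm: "finite_measure M" and X[measurable]: "X \<in> borel_measurable M"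
    and S[measurable]: "S \<in> sets M" and T[measurable]: "T \<in> sets M"
    and c1: "c1 \<ge> 0" and c2: "c2 \<ge> 0"
    and eq: "\<And>A. A \<in> sets borel \<Longrightarrow> c1 * measure M ({\<omega>\<in>space M. X \<omega> \<in> A} \<inter> S) = c2 * measure M ({\<omega>\<in>space M. X \<omega> \<in> A} \<inter> T)"
  shows "c1 * integral\<^sup>L M (\<lambda>\<omega>. indicator S \<omega> * X \<omega>) = c2 * integral\<^sup>L M (\<lambda>\<omega>. indicator T \<omega> * X \<omega>)"
proof -
  interpret finite_measure M by (rule fm)
  have em: "emeasure (distr (density M (\<lambda>\<omega>. ennreal (c * indicator R \<omega>))) borel X) A = ennreal (c * measure M ({\<omega>\<in>space M. X \<omega> \<in> A} \<inter> R))"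
    if "A \<in> sets borel" "R \<in> sets M" "c \<ge> 0" for A R c
  proof -
    have "emeasure (distr (density M (\<lambda>\<omega>. ennreal (c * indicator R \<omega>))) borel X) A
       = emeasure (density M (\<lambda>\<omega>. ennreal (c * indicator R \<omega>))) (X -` A \<inter> space M)"
      using that by (subst emeasure_distr) auto
    also have "\<dots> = (\<integral>\<^sup>+\<omega>. ennreal (c * indicator R \<omega>) * indicator (X -` A \<inter> space M) \<omega> \<partial>M)"
      using that by (subst emeasure_density) auto
    also have "\<dots> = (\<integral>\<^sup>+\<omega>. ennreal c * indicator ({\<omega>\<in>space M. X \<omega> \<in> A} \<inter> R) \<omega> \<partial>M)"
      by (rule nn_integral_cong) (auto split: split_indicator)
    also have "\<dots> = ennreal c * emeasure M ({\<omega>\<in>space M. X \<omega> \<in> A} \<inter> R)"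
      using that by (subst nn_integral_cmult_indicator) auto
    also have "\<dots> = ennreal (c * measure M ({\<omega>\<in>space M. X \<omega> \<in> A} \<inter> R))"
      using that by (simp add: emeasure_eq_measure ennreal_mult)
    finally show ?thesis .
  qed
  have "distr (density M (\<lambda>\<omega>. ennreal (c1 * indicator S \<omega>))) borel X = distr (density M (\<lambda>\<omega>. ennreal (c2 * indicator T \<omega>))) borel X"
    by (rule measure_eqI) (simp_all add: em c1 c2 eq)
  then have "integral\<^sup>L (distr (density M (\<lambda>\<omega>. ennreal (c1 * indicator S \<omega>))) borel X) (\<lambda>x. x) = integral\<^sup>L (distr (density M (\<lambda>\<omega>. ennreal (c2 * indicator T \<omega>))) borel X) (\<lambda>x. x)"
    by simp
  then have "integral\<^sup>L M (\<lambda>\<omega>. (c1 * indicator S \<omega>) * X \<omega>) = integral\<^sup>L M (\<lambda>\<omega>. (c2 * indicator T \<omega>) * X \<omega>)"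
    using c1 c2 by (simp add: integral_distr integral_density)
  then show ?thesis by (simp add: mult.assoc)
qed

lemma lin4:
  fixes M :: "'a measure" and f g h :: "'a \<Rightarrow> real"
  assumes "finite_measure M" "integrable M f" "integrable M g" "integrable M h" "S \<in> sets M"
  shows "integral\<^sup>L M (\<lambda>\<omega>. k * f \<omega> - a * g \<omega> - b * h \<omega> + c * indicator S \<omega>)
    = k * integral\<^sup>L M f - a * integral\<^sup>L M g - b * integral\<^sup>L M h + c * measure M S"
proof -
  interpret finite_measure M by (rule assms(1))
  have "integrable M (indicator S :: 'a \<Rightarrow> real)" using assms(5) by (simp add: integrable_indicator_iff emeasure_eq_measure)
  then show ?thesis using assms by simp
qed

theorem mainTheorem11:
  fixes M :: "'a measure" and U V X Y :: "'a \<Rightarrow> real" and p q :: real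
  assumes "prob_space M"
    and "p \<in> {0<..1}" and "q \<in> {0<..1}"
    and "prob_space.indep_var M borel U borel V"
    and "AE \<omega> in M. U \<omega> = 0 \<or> U \<omega> = 1"
    and "AE \<omega> in M. V \<omega> = 0 \<or> V \<omega> = 1"
    and "measure M {\<omega>\<in>space M. U \<omega> = 1} = p"
    and "measure M {\<omega>\<in>space M. V \<omega> = 1} = q"
    and "X \<in> borel_measurable M" and "Y \<in> borel_measurable M"
    and "integrable M (\<lambda>\<omega>. (X \<omega>)\<^sup>2)" and "integrable M (\<lambda>\<omega>. (Y \<omega>)\<^sup>2)"
    and "cond_indep_discrete M X V U"
    and "cond_indep_discrete M Y U V"
  shows "covariance M (\<lambda>\<omega>. U \<omega> * X \<omega>) (\<lambda>\<omega>. V \<omega> * Y \<omega>)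
         = p * q * covariance (uniform_measure M {\<omega>\<in>space M. U \<omega> = 1 \<and> V \<omega> = 1}) X Y"
proof -
  interpret prob_space M by (rule assms(1))
  have [measurable]: "U \<in> borel_measurable M" using assms(4) by (rule indep_var_rv1)
  have [measurable]: "V \<in> borel_measurable M" using assms(4) by (rule indep_var_rv2)
  have [measurable]: "X \<in> borel_measurable M" "Y \<in> borel_measurable M" using assms(9,10) by auto
  define S1 where "S1 = {\<omega>\<in>space M. U \<omega> = 1}"
  define T1 where "T1 = {\<omega>\<in>space M. V \<omega> = 1}"
  define S where "S = {\<omega>\<in>space M. U \<omega> = 1 \<and> V \<omega> = 1}"
  have [measurable]: "S1 \<in> sets M" "T1 \<in> sets M" "S \<in> sets M" unfolding S1_def T1_def S_def by measurable
  have p: "p > 0" and q: "q > 0" using assms(2,3) by auto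
  have PS1: "measure M S1 = p" and PT1: "measure M T1 = q" using assms(7,8) S1_def T1_def by auto
  have PS: "measure M S = p * q"
  proof -
    have "\<P>(x in M. U x \<in> {1} \<and> V x \<in> {1}) = \<P>(x in M. U x \<in> {1}) * \<P>(x in M. V x \<in> {1})"
      by (rule prob_indep_random_variable[OF assms(4)]) auto
    then show ?thesis using assms(7,8) unfolding S_def by simp
  qed
  have iX: "integrable M X" by (rule square_integrable_imp_integrable) (use assms(11) in auto)
  have iY: "integrable M Y" by (rule square_integrable_imp_integrable) (use assms(12) in auto)
  have iXY: "integrable M (\<lambda>\<omega>. X \<omega> * Y \<omega>)"
  proof (rule Bochner_Integration.integrable_bound[where f="\<lambda>\<omega>. (X \<omega>)\<^sup>2 + (Y \<omega>)\<^sup>2"])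
    show "integrable M (\<lambda>\<omega>. (X \<omega>)\<^sup>2 + (Y \<omega>)\<^sup>2)" using assms(11,12) by auto
    show "AE \<omega> in M. norm (X \<omega> * Y \<omega>) \<le> norm ((X \<omega>)\<^sup>2 + (Y \<omega>)\<^sup>2)"
    proof (rule AE_I2)
      fix \<omega>
      have a: "norm ((X \<omega>)\<^sup>2 + (Y \<omega>)\<^sup>2) = \<bar>X \<omega>\<bar>\<^sup>2 + \<bar>Y \<omega>\<bar>\<^sup>2" by simp
      have b: "norm (X \<omega> * Y \<omega>) = \<bar>X \<omega>\<bar> * \<bar>Y \<omega>\<bar>" by (simp add: abs_mult)
      have c: "0 \<le> (\<bar>X \<omega>\<bar> - \<bar>Y \<omega>\<bar>)\<^sup>2" by simp
      then have "0 \<le> \<bar>X \<omega>\<bar>\<^sup>2 + \<bar>Y \<omega>\<bar>\<^sup>2 - 2 * \<bar>X \<omega>\<bar> * \<bar>Y \<omega>\<bar>" by (simp only: power2_diff)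
      moreover have "0 \<le> \<bar>X \<omega>\<bar> * \<bar>Y \<omega>\<bar>" by simp
      ultimately show "norm (X \<omega> * Y \<omega>) \<le> norm ((X \<omega>)\<^sup>2 + (Y \<omega>)\<^sup>2)" unfolding a b by linarith
    qed
  qed auto
  have iind: "integrable M (\<lambda>\<omega>. indicator R \<omega> * f \<omega>)" if "R \<in> sets M" "integrable M f" for R and f :: "'a \<Rightarrow> real"
    using integrable_mult_indicator[OF that] by simp
  define IXS where "IXS = integral\<^sup>L M (\<lambda>\<omega>. indicator S \<omega> * X \<omega>)"
  define IYS where "IYS = integral\<^sup>L M (\<lambda>\<omega>. indicator S \<omega> * Y \<omega>)"
  define IXS1 where "IXS1 = integral\<^sup>L M (\<lambda>\<omega>. indicator S1 \<omega> * X \<omega>)"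
  define IYT1 where "IYT1 = integral\<^sup>L M (\<lambda>\<omega>. indicator T1 \<omega> * Y \<omega>)"
  define IXYS where "IXYS = integral\<^sup>L M (\<lambda>\<omega>. indicator S \<omega> * (X \<omega> * Y \<omega>))"
  have hX: "p * IXS = (p * q) * IXS1" unfolding IXS_def IXS1_def
  proof (rule cond_int)
    show "finite_measure M" by unfold_locales
    fix A :: "real set" assume A: "A \<in> sets borel"
    have "measure M {\<omega>\<in>space M. X \<omega> \<in> A \<and> V \<omega> \<in> {1} \<and> U \<omega> = 1} * measure M {\<omega>\<in>space M. U \<omega> = 1}
      = measure M {\<omega>\<in>space M. X \<omega> \<in> A \<and> U \<omega> = 1} * measure M {\<omega>\<in>space M. V \<omega> \<in> {1} \<and> U \<omega> = 1}"
      using assms(13) A borel_singleton[OF sets.empty_sets, of 1] unfolding cond_indep_discrete_def by blast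
    moreover have "{\<omega>\<in>space M. X \<omega> \<in> A \<and> V \<omega> \<in> {1} \<and> U \<omega> = 1} = {\<omega>\<in>space M. X \<omega> \<in> A} \<inter> S"
      "{\<omega>\<in>space M. X \<omega> \<in> A \<and> U \<omega> = 1} = {\<omega>\<in>space M. X \<omega> \<in> A} \<inter> S1"
      "{\<omega>\<in>space M. V \<omega> \<in> {1} \<and> U \<omega> = 1} = S"
      unfolding S_def S1_def by auto
    ultimately show "p * measure M ({\<omega>\<in>space M. X \<omega> \<in> A} \<inter> S) = p * q * measure M ({\<omega>\<in>space M. X \<omega> \<in> A} \<inter> S1)"
      using assms(7) PS by (simp add: mult.commute)
  qed (use p q in auto)
  have hY: "q * IYS = (p * q) * IYT1" unfolding IYS_def IYT1_def
  proof (rule cond_int)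
    show "finite_measure M" by unfold_locales
    fix A :: "real set" assume A: "A \<in> sets borel"
    have "measure M {\<omega>\<in>space M. Y \<omega> \<in> A \<and> U \<omega> \<in> {1} \<and> V \<omega> = 1} * measure M {\<omega>\<in>space M. V \<omega> = 1}
      = measure M {\<omega>\<in>space M. Y \<omega> \<in> A \<and> V \<omega> = 1} * measure M {\<omega>\<in>space M. U \<omega> \<in> {1} \<and> V \<omega> = 1}"
      using assms(14) A borel_singleton[OF sets.empty_sets, of 1] unfolding cond_indep_discrete_def by blast
    moreover have "{\<omega>\<in>space M. Y \<omega> \<in> A \<and> U \<omega> \<in> {1} \<and> V \<omega> = 1} = {\<omega>\<in>space M. Y \<omega> \<in> A} \<inter> S"
      "{\<omega>\<in>space M. Y \<omega> \<in> A \<and> V \<omega> = 1} = {\<omega>\<in>space M. Y \<omega> \<in> A} \<inter> T1"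
      "{\<omega>\<in>space M. U \<omega> \<in> {1} \<and> V \<omega> = 1} = S"
      unfolding S_def T1_def by auto
    ultimately show "q * measure M ({\<omega>\<in>space M. Y \<omega> \<in> A} \<inter> S) = p * q * measure M ({\<omega>\<in>space M. Y \<omega> \<in> A} \<inter> T1)"
      using assms(8) PS by (simp add: mult.commute)
  qed (use p q in auto)
  have hX': "IXS = q * IXS1" using hX p by (simp add: mult.assoc)
  have hY': "IYS = p * IYT1" using hY q by (metis mult.commute mult.left_commute mult_cancel_left less_irrefl)
  let ?f = "\<lambda>\<omega>. indicator S1 \<omega> * X \<omega>" and ?g = "\<lambda>\<omega>. indicator T1 \<omega> * Y \<omega>"
  have aeU: "AE \<omega> in M. U \<omega> * X \<omega> = ?f \<omega>" using assms(5) AE_space by eventually_elim (auto simp: S1_def split: split_indicator)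
  have aeV: "AE \<omega> in M. V \<omega> * Y \<omega> = ?g \<omega>" using assms(6) AE_space by eventually_elim (auto simp: T1_def split: split_indicator)
  have e1: "integral\<^sup>L M (\<lambda>\<omega>. U \<omega> * X \<omega>) = IXS1" unfolding IXS1_def by (rule integral_cong_AE) (use aeU in auto)
  have e2: "integral\<^sup>L M (\<lambda>\<omega>. V \<omega> * Y \<omega>) = IYT1" unfolding IYT1_def by (rule integral_cong_AE) (use aeV in auto)
  have fg: "\<And>\<omega>. ?f \<omega> * ?g \<omega> = indicator S \<omega> * (X \<omega> * Y \<omega>)"
    unfolding S_def S1_def T1_def by (auto split: split_indicator)
  have iS: "integrable M (\<lambda>\<omega>. indicator S \<omega> * (X \<omega> * Y \<omega>))" by (rule iind) (auto intro: iXY)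
  have if1: "integrable M ?f" by (rule iind) (auto intro: iX)
  have ig1: "integrable M ?g" by (rule iind) (auto intro: iY)
  have "covariance M (\<lambda>\<omega>. U \<omega> * X \<omega>) (\<lambda>\<omega>. V \<omega> * Y \<omega>)
      = integral\<^sup>L M (\<lambda>\<omega>. (?f \<omega> - IXS1) * (?g \<omega> - IYT1))"
    unfolding covariance_def e1 e2 by (rule integral_cong_AE) (use aeU aeV in auto)
  also have "\<dots> = integral\<^sup>L M (\<lambda>\<omega>. indicator S \<omega> * (X \<omega> * Y \<omega>) - IYT1 * ?f \<omega> - IXS1 * ?g \<omega> + IXS1 * IYT1)"
    by (rule Bochner_Integration.integral_cong, simp, subst fg[symmetric], simp add: algebra_simps)
  also have "\<dots> = IXYS - IYT1 * IXS1 - IXS1 * IYT1 + IXS1 * IYT1"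
    using iS if1 ig1 by (simp add: IXYS_def IXS1_def IYT1_def prob_space)
  finally have L: "covariance M (\<lambda>\<omega>. U \<omega> * X \<omega>) (\<lambda>\<omega>. V \<omega> * Y \<omega>) = IXYS - IXS1 * IYT1" by simp
  have dens: "uniform_measure M S = density M (\<lambda>\<omega>. ennreal (indicator S \<omega> / (p * q)))"
  proof -
    have "emeasure M S = ennreal (p * q)" using PS by (simp add: emeasure_eq_measure)
    then show ?thesis unfolding uniform_measure_def
      using p q by (intro arg_cong[where f="density M"] ext) (auto split: split_indicator simp: divide_ennreal ennreal_1[symmetric] simp del: ennreal_1)
  qed
  have iu: "integral\<^sup>L (uniform_measure M S) h = integral\<^sup>L M (\<lambda>\<omega>. indicator S \<omega> / (p * q) * h \<omega>)"
    if [measurable]: "h \<in> borel_measurable M" for h :: "'a \<Rightarrow> real"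
    unfolding dens using p q by (subst integral_density) auto
  define mX where "mX = IXS / (p * q)"
  define mY where "mY = IYS / (p * q)"
  have mX: "integral\<^sup>L (uniform_measure M S) X = mX" unfolding mX_def IXS_def by (subst iu) auto
  have mY: "integral\<^sup>L (uniform_measure M S) Y = mY" unfolding mY_def IYS_def by (subst iu) auto
  have iSX: "integrable M (\<lambda>\<omega>. indicator S \<omega> * X \<omega>)" by (rule iind) (auto intro: iX)
  have iSY: "integrable M (\<lambda>\<omega>. indicator S \<omega> * Y \<omega>)" by (rule iind) (auto intro: iY)
  have "covariance (uniform_measure M S) X Y = integral\<^sup>L M (\<lambda>\<omega>. indicator S \<omega> / (p * q) * ((X \<omega> - mX) * (Y \<omega> - mY)))"
    unfolding covariance_def mX mY by (subst iu) auto
  also have "\<dots> = integral\<^sup>L M (\<lambda>\<omega>. (1 / (p * q)) * (indicator S \<omega> * (X \<omega> * Y \<omega>)) - (mY / (p * q)) * (indicator S \<omega> * X \<omega>)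
        - (mX / (p * q)) * (indicator S \<omega> * Y \<omega>) + (mX * mY / (p * q)) * indicator S \<omega>)"
    using p q by (intro Bochner_Integration.integral_cong) (auto simp: field_simps)
  also have "\<dots> = (1 / (p * q)) * IXYS - (mY / (p * q)) * IXS - (mX / (p * q)) * IYS + (mX * mY / (p * q)) * measure M S"
    unfolding IXYS_def IXS_def IYS_def by (rule lin4) (use iS iSX iSY in \<open>auto intro: finite_measure_axioms\<close>)
  finally have R: "covariance (uniform_measure M S) X Y = (1 / (p * q)) * IXYS - (mY / (p * q)) * IXS - (mX / (p * q)) * IYS + (mX * mY / (p * q)) * measure M S" .
  show ?thesis unfolding L S_def[symmetric] R PS mX_def mY_def hX' hY'
    using p q by (simp add: field_simps)
qed

end
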